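(* Let $1\le k\le n$ and let $\mathcal{C}$ be any linear storage code (with any sub-packetization $\alpha\ge 1$ and generator matrix of rank $k\alpha$) on a storage network with node set $\mathcal{N}=\{1,\dots,n\}$ and symmetric round-trip-time function $\tau$. Then for every node $i\in\mathcal{N}$, \[ L_{max}^{(i)}(\mathcal{C}) \ge \lambda_{k-1}^{(i)}, \] and the average latency satisfies \[ L_{avg}(\mathcal{C}) \ge \frac{1}{kn}\sum_{i\in\mathcal{N}}\sum_{j=0}^{k-1}\lambda_{j}^{(i)}. \]
   Context: A storage network consists of $n$ nodes $\mathcal{N}=\{1,\dots,n\}$ and a round-trip-time (RTT) function $\tau:\mathcal{N}\times\mathcal{N}\to\mathbb{R}_{\ge 0}$ with $\tau(i,j)=\tau(j,i)$ and $\tau(i,i)=0$. There are $k\le n$ information files $W_1,\dots,W_k$, each consisting of $\alpha$ sub-packets in a finite field $\mathcal{F}$; node $i$ stores $X_i\in\mathcal{F}^\alpha$. A linear storage code $\mathcal{C}$ is given by a $(k\alpha\times n\alpha)$ matrix $G$ over $\mathcal{F}$ of rank $k\alpha$ with $\underline{X}^T=\underline{W}^T G$, where $\underline{X}$ and $\underline{W}$ are the concatenations of all sub-packets of $X_1,\dots,X_n$ and $W_1,\dots,W_k$. File $W_j$ is decodable from a set $S\subseteq\mathcal{N}$ if there is a function $\varphi$ with $\varphi((X_t)_{t\in S})=W_j$ for all choices of the files. The latency of node $i$ for file $W_j$ is $l_j^{(i)}=\min\{L\ge 0: W_j \text{ is decodable from } \{t\in\mathcal{N}:\tau(t,i)\le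 L\}\}$. The per-node worst-case latency is $L_{max}^{(i)}(\mathcal{C})=\max_{j\in[k]} l_j^{(i)}$ and the average latency is $L_{avg}(\mathcal{C})=\frac{1}{kn}\sum_{i\in\mathcal{N}}\sum_{j\in[k]} l_j^{(i)}$. For node $i$, $\lambda_0^{(i)}\le\lambda_1^{(i)}\le\dots\le\lambda_{n-1}^{(i)}$ denotes the multiset $\{\tau(j,i):j\in\mathcal{N}\}$ sorted in ascending order (so $\lambda_0^{(i)}=0$). *)

theory Defs
  imports "Jordan_Normal_Form.DL_Rank"
begin

text \<open>Nodes are 1..n, files are 1..k, sub-packets are indexed 0..alpha-1.
  The file vector W (concatenation of W_1,...,W_k) has length k*alpha, entry (j-1)*alpha+b
  being sub-packet b of file W_j.  The generator matrix G is (k*alpha) x (n*alpha), and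
  X^T = W^T G, so sub-packet a of node t is W dot (column (t-1)*alpha+a of G).\<close>

definition node_content :: "'f::field mat \<Rightarrow> nat \<Rightarrow> 'f vec \<Rightarrow> nat \<Rightarrow> 'f vec" where
  "node_content G \<alpha> W t = vec \<alpha> (\<lambda>a. W \<bullet> col G ((t - 1) * \<alpha> + a))"

definition file_content :: "nat \<Rightarrow> 'f::field vec \<Rightarrow> nat \<Rightarrow> 'f vec" where
  "file_content \<alpha> W j = vec \<alpha> (\<lambda>b. W $ ((j - 1) * \<alpha> + b))"

definition decodable :: "'f::field mat \<Rightarrow> nat \<Rightarrow> nat \<Rightarrow> nat \<Rightarrow> nat set \<Rightarrow> bool" where
  "decodable G k \<alpha> j S \<longleftrightarrow>
     (\<exists>\<phi> :: (nat \<Rightarrow> 'f vec) \<Rightarrow> 'f vec.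
        \<forall>W \<in> carrier_vec (k * \<alpha>).
          \<phi> (\<lambda>t. if t \<in> S then node_content G \<alpha> W t else 0\<^sub>v \<alpha>) = file_content \<alpha> W j)"

definition latency :: "'f::field mat \<Rightarrow> nat \<Rightarrow> nat \<Rightarrow> nat \<Rightarrow> (nat \<Rightarrow> nat \<Rightarrow> real) \<Rightarrow> nat \<Rightarrow> nat \<Rightarrow> real" where
  "latency G n k \<alpha> \<tau> j i =
     (LEAST L::real. L \<ge> 0 \<and> decodable G k \<alpha> j {t \<in> {1..n}. \<tau> t i \<le> L})"

definition L_max :: "'f::field mat \<Rightarrow> nat \<Rightarrow> nat \<Rightarrow> nat \<Rightarrow> (nat \<Rightarrow> nat \<Rightarrow> real) \<Rightarrow> nat \<Rightarrow> real" where
  "L_max G n k \<alpha> \<tau> i = Max ((\<lambda>j. latency G n k \<alpha> \<tau> j i) ` {1..k})"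

definition L_avg :: "'f::field mat \<Rightarrow> nat \<Rightarrow> nat \<Rightarrow> nat \<Rightarrow> (nat \<Rightarrow> nat \<Rightarrow> real) \<Rightarrow> real" where
  "L_avg G n k \<alpha> \<tau> =
     (1 / (real k * real n)) * (\<Sum>i\<in>{1..n}. \<Sum>j\<in>{1..k}. latency G n k \<alpha> \<tau> j i)"

definition lam :: "nat \<Rightarrow> (nat \<Rightarrow> nat \<Rightarrow> real) \<Rightarrow> nat \<Rightarrow> nat \<Rightarrow> real" where
  "lam n \<tau> i j = sort (map (\<lambda>t. \<tau> t i) [1..<n+1]) ! j"

end

theory Submission imports Defs "HOL-Library.FuncSet" begin

lemma len_filter_sort: "length (filter P (sort xs)) = length (filter P xs)"
  by (metis mset_filter mset_sort size_mset)

lemma sort_nth_le: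
  fixes xs :: "'a::linorder list"
  assumes "m < length (filter (\<lambda>x. x \<le> L) xs)"
  shows "sort xs ! m \<le> L"
proof (rule ccontr)
  let ?ys = "sort xs"
  assume "\<not> ?ys ! m \<le> L"
  hence gt: "?ys ! m > L" by simp
  have "m < length ?ys" using assms length_filter_le[of _ xs] by (metis length_sort order.strict_trans2)
  have "filter (\<lambda>x. x \<le> L) (drop m ?ys) = []"
  proof -
    have "\<forall>x\<in>set (drop m ?ys). \<not> x \<le> L"
    proof
      fix x assume "x \<in> set (drop m ?ys)"
      then obtain p where p: "p < length (drop m ?ys)" "x = drop m ?ys ! p" by (metis in_set_conv_nth)
      hence "x = ?ys ! (m + p)" "m + p < length ?ys" by auto
      hence "?ys ! m \<le> x" using sorted_nth_mono[of ?ys m "m+p"] by simp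
      thus "\<not> x \<le> L" using gt by simp
    qed
    thus ?thesis by (simp add: filter_empty_conv)
  qed
  hence "length (filter (\<lambda>x. x \<le> L) ?ys) = length (filter (\<lambda>x. x \<le> L) (take m ?ys))"
    by (metis append_Nil2 append_take_drop_id filter_append)
  also have "\<dots> \<le> m" by (metis length_filter_le length_take min.bounded_iff nle_le)
  finally show False using assms len_filter_sort[of _ xs] by simp
qed

lemma sort_nth_count:
  fixes xs :: "'a::linorder list"
  assumes "m < length xs"
  shows "m < length (filter (\<lambda>x. x \<le> sort xs ! m) xs)"
proof -
  let ?ys = "sort xs"
  let ?P = "\<lambda>x. x \<le> ?ys ! m"
  have "filter ?P (take (Suc m) ?ys) = take (Suc m) ?ys"
  proof (rule filter_True, rule)
    fix x assume "x \<in> set (take (Suc m) ?ys)"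
    then obtain p where p: "p < length (take (Suc m) ?ys)" "x = take (Suc m) ?ys ! p" by (metis in_set_conv_nth)
    hence "x = ?ys ! p" "p \<le> m" by auto
    thus "?P x" using sorted_nth_mono[of ?ys p m] assms by simp
  qed
  hence "length (filter ?P (take (Suc m) ?ys)) = Suc m" using assms by simp
  moreover have "length (filter ?P ?ys) \<ge> length (filter ?P (take (Suc m) ?ys))"
    by (metis append_take_drop_id filter_append length_append le_add1)
  ultimately show ?thesis using len_filter_sort[of ?P xs] by simp
qed

lemma least_ex:
  fixes f :: "nat \<Rightarrow> real" and D :: "nat set \<Rightarrow> bool"
  assumes A: "finite A" and mono: "\<And>S S'. S \<subseteq> S' \<Longrightarrow> D S \<Longrightarrow> D S'" and DA: "D A"
  defines "Q \<equiv> \<lambda>L. L \<ge> 0 \<and> D {t\<in>A. f t \<le> L}"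
  shows "Q (LEAST L. Q L) \<and> (\<forall>L. Q L \<longrightarrow> (LEAST L. Q L) \<le> L)"
proof -
  let ?V = "insert 0 (f ` A)"
  let ?C = "{L \<in> ?V. Q L}"
  have fC: "finite ?C" using A by simp
  have "Max ?V \<in> ?C"
  proof -
    have "{t\<in>A. f t \<le> Max ?V} = A" using A by auto
    moreover have "Max ?V \<ge> 0" using A by simp
    moreover have "Max ?V \<in> ?V" using A by (intro Max_in) auto
    ultimately show ?thesis using DA A unfolding Q_def by simp
  qed
  hence ne: "?C \<noteq> {}" by blast
  have low: "Min ?C \<le> L" if "Q L" for L
  proof -
    let ?W = "insert 0 {f t | t. t \<in> A \<and> f t \<le> L}"
    have fW: "finite ?W" using A by simp
    let ?L' = "Max ?W"
    have "?L' \<le> L" using fW that unfolding Q_def by (auto intro!: Max.boundedI)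
    moreover have "?L' \<ge> 0" using fW by simp
    moreover have "{t\<in>A. f t \<le> ?L'} = {t\<in>A. f t \<le> L}"
    proof -
      have "f t \<le> ?L'" if "t \<in> A" "f t \<le> L" for t using fW that by (intro Max_ge) auto
      thus ?thesis using \<open>?L' \<le> L\<close> by auto
    qed
    moreover have "?L' \<in> ?V"
    proof -
      have "?L' \<in> ?W" using fW by (intro Max_in) auto
      thus ?thesis by auto
    qed
    ultimately have "?L' \<in> ?C" using that unfolding Q_def by auto
    hence "Min ?C \<le> ?L'" using fC by simp
    thus ?thesis using \<open>?L' \<le> L\<close> by simp
  qed
  have "Min ?C \<in> ?C" using fC ne by (rule Min_in)
  hence QM: "Q (Min ?C)" by simp
  have "(LEAST L. Q L) = Min ?C" by (rule Least_equality) (use QM low in auto)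
  thus ?thesis using QM low by simp
qed

lemma rank_full_inj:
  fixes G :: "'f::field mat"
  assumes G: "G \<in> carrier_mat m nc" and r: "vec_space.rank m G = m"
    and W: "W \<in> carrier_vec m" and orth: "\<And>c. c < nc \<Longrightarrow> W \<bullet> col G c = 0"
  shows "W = 0\<^sub>v m"
proof -
  interpret vs: vec_space "TYPE('f)" m .
  let ?P = "\<lambda>T. T \<subseteq> set (cols G) \<and> vs.lin_indpt T"
  have e: "vs.lin_indpt {}"
    by (metis (no_types) empty_subsetI vs.fin_dim vs.finite_basis_exists vs.subset_li_is_li vs.basis_def)
  obtain U where U: "finite U" "maximal U ?P"
    using maximal_exists_superset[of "set (cols G)" ?P "{}"] e by auto
  have cU: "card U = m" using vs.rank_card_indpt[OF G U(2)] r by simp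
  have Usub: "U \<subseteq> set (cols G)" "vs.lin_indpt U" using U(2) unfolding maximal_def by auto
  have Ucar: "U \<subseteq> carrier_vec m" using Usub(1) G cols_dim by blast
  have "vs.basis U"
    by (rule vs.dim_li_is_basis) (use U Ucar Usub cU vs.dim_is_n in auto)
  hence spanU: "vs.span U = carrier_vec m" unfolding vs.basis_def by auto
  let ?N = "{v \<in> carrier_vec m. W \<bullet> v = 0}"
  have sub: "submodule class_ring ?N vs.V"
    apply (unfold submodule_def)
    using W by (auto simp: vs.module_axioms scalar_prod_add_distrib scalar_prod_smult_distrib)
  have "U \<subseteq> ?N"
  proof
    fix u assume "u \<in> U"
    then obtain c where "c < nc" "u = col G c" using Usub(1) G by (auto simp: cols_def)
    then show "u \<in> ?N" using orth G by auto
  qed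
  hence "vs.span U \<subseteq> ?N" using vs.span_is_subset sub by blast
  hence all: "\<And>v. v \<in> carrier_vec m \<Longrightarrow> W \<bullet> v = 0" using spanU by auto
  show ?thesis
  proof (rule eq_vecI)
    fix i assume "i < dim_vec (0\<^sub>v m)"
    hence "i < m" by simp
    have "W \<bullet> unit_vec m i = W $ i" using W \<open>i<m\<close> by (simp add: scalar_prod_right_unit)
    then show "W $ i = 0\<^sub>v m $ i" using all[of "unit_vec m i"] \<open>i<m\<close> by simp
  qed (use W in simp)
qed

lemma decodable_mono:
  assumes "S \<subseteq> S'" "decodable G k \<alpha> j S"
  shows "decodable G k \<alpha> j S'"
proof -
  obtain \<phi> :: "(nat \<Rightarrow> 'a vec) \<Rightarrow> 'a vec" where phi: "\<forall>W \<in> carrier_vec (k * \<alpha>).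
          \<phi> (\<lambda>t. if t \<in> S then node_content G \<alpha> W t else 0\<^sub>v \<alpha>) = file_content \<alpha> W j"
    using assms(2) unfolding decodable_def by blast
  show ?thesis unfolding decodable_def
  proof (intro exI[of _ "\<lambda>f. \<phi> (\<lambda>t. if t \<in> S then f t else 0\<^sub>v \<alpha>)"] ballI)
    fix W :: "'a vec" assume W: "W \<in> carrier_vec (k * \<alpha>)"
    have "(\<lambda>t. if t \<in> S then (if t \<in> S' then node_content G \<alpha> W t else 0\<^sub>v \<alpha>) else 0\<^sub>v \<alpha>)
       = (\<lambda>t. if t \<in> S then node_content G \<alpha> W t else 0\<^sub>v \<alpha>)" using assms(1) by (intro ext) auto
    thus "\<phi> (\<lambda>t. if t \<in> S then (if t \<in> S' then node_content G \<alpha> W t else 0\<^sub>v \<alpha>) else 0\<^sub>v \<alpha>)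
          = file_content \<alpha> W j" using phi W by simp
  qed
qed

lemma decodable_all:
  fixes G :: "'f::field mat"
  assumes G: "G \<in> carrier_mat (k * \<alpha>) (n * \<alpha>)" and r: "vec_space.rank (k * \<alpha>) G = k * \<alpha>"
  shows "decodable G k \<alpha> j {1..n}"
proof -
  let ?C = "carrier_vec (k * \<alpha>) :: 'f vec set"
  let ?g = "\<lambda>W. (\<lambda>t. if t \<in> {1..n} then node_content G \<alpha> W t else 0\<^sub>v \<alpha>)"
  have inj: "W = W'" if W: "W \<in> ?C" and W': "W' \<in> ?C" and eq: "?g W = ?g W'" for W W'
  proof -
    have "(W - W') \<bullet> col G c = 0" if c: "c < n * \<alpha>" for c
    proof -
      have a0: "\<alpha> > 0" using c by (cases \<alpha>) auto
      define t where "t = c div \<alpha> + 1"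
      define a where "a = c mod \<alpha>"
      have "c div \<alpha> < n" using c by (simp add: less_mult_imp_div_less)
      hence t: "t \<in> {1..n}" unfolding t_def by auto
      have a: "a < \<alpha>" using a0 unfolding a_def by simp
      have ca: "(t - 1) * \<alpha> + a = c" unfolding t_def a_def by simp
      have "node_content G \<alpha> W t $ a = node_content G \<alpha> W' t $ a"
        using fun_cong[OF eq, of t] t by simp
      hence "W \<bullet> col G c = W' \<bullet> col G c" using a ca unfolding node_content_def by simp
      moreover have "col G c \<in> carrier_vec (k * \<alpha>)" using G c by simp
      ultimately show ?thesis using W W' by (simp add: minus_scalar_prod_distrib)
    qed
    hence "W - W' = 0\<^sub>v (k * \<alpha>)"
      by (intro rank_full_inj[OF G r]) (use W W' in auto)
    thus ?thesis using W W'
      by (metis carrier_vecD eq_vecI index_minus_vec(1) index_zero_vec(1) right_minus_eq index_minus_vec(2))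
  qed
  show ?thesis unfolding decodable_def
  proof (intro exI[of _ "\<lambda>f. file_content \<alpha> (SOME W. W \<in> ?C \<and> ?g W = f) j"] ballI)
    fix W :: "'f vec" assume W: "W \<in> ?C"
    have "(SOME W'. W' \<in> ?C \<and> ?g W' = ?g W) = W"
      by (rule some_equality) (use W inj in auto)
    thus "file_content \<alpha> (SOME W'. W' \<in> ?C \<and> ?g W' = ?g W) j = file_content \<alpha> W j" by simp
  qed
qed


lemma finite_carrier_vec_fin: "finite (carrier_vec m :: 'f::finite vec set)"
proof -
  have "carrier_vec m \<subseteq> vec_of_list ` {xs :: 'f list. set xs \<subseteq> UNIV \<and> length xs = m}"
  proof
    fix v :: "'f vec" assume "v \<in> carrier_vec m"
    thus "v \<in> vec_of_list ` {xs. set xs \<subseteq> UNIV \<and> length xs = m}"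
      by (intro image_eqI[of _ _ "list_of_vec v"]) (auto simp: vec_list)
  qed
  thus ?thesis by (rule finite_subset) (intro finite_imageI finite_lists_length_eq, simp)
qed

lemma card_carrier_vec_ge2:
  assumes "1 \<le> m"
  shows "2 \<le> card (carrier_vec m :: 'f::{field,finite} vec set)"
proof -
  have "0\<^sub>v m \<noteq> (vec m (\<lambda>_. 1) :: 'f vec)"
  proof
    assume "0\<^sub>v m = (vec m (\<lambda>_. 1) :: 'f vec)"
    hence "(0\<^sub>v m :: 'f vec) $ 0 = vec m (\<lambda>_. 1) $ 0" by simp
    thus False using assms by simp
  qed
  hence "card {0\<^sub>v m, vec m (\<lambda>_. 1) :: 'f vec} = 2" by simp
  moreover have "{0\<^sub>v m, vec m (\<lambda>_. 1) :: 'f vec} \<subseteq> carrier_vec m" by auto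
  ultimately show ?thesis using card_mono[OF finite_carrier_vec_fin] by metis
qed

lemma card_decode:
  fixes G :: "'f::{field,finite} mat"
  assumes a: "1 \<le> \<alpha>" and S: "finite S" and J: "J \<subseteq> {1..k}"
    and dec: "\<forall>j\<in>J. decodable G k \<alpha> j S"
  shows "card J \<le> card S"
proof -
  let ?V = "carrier_vec \<alpha> :: 'f vec set"
  let ?C = "carrier_vec (k * \<alpha>) :: 'f vec set"
  let ?g = "\<lambda>W. (\<lambda>t. if t \<in> S then node_content G \<alpha> W t else 0\<^sub>v \<alpha>)"
  let ?h = "\<lambda>W. restrict (\<lambda>j. file_content \<alpha> W j) J"
  let ?T = "{f. \<forall>t. (t \<in> S \<longrightarrow> f t \<in> ?V) \<and> (t \<notin> S \<longrightarrow> f t = 0\<^sub>v \<alpha>)}"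
  have fV: "finite ?V" by (rule finite_carrier_vec_fin)
  have fJ: "finite J" using J finite_subset by blast
  obtain \<phi> :: "nat \<Rightarrow> (nat \<Rightarrow> 'f vec) \<Rightarrow> 'f vec" where phi:
    "\<And>j W. j \<in> J \<Longrightarrow> W \<in> ?C \<Longrightarrow> \<phi> j (?g W) = file_content \<alpha> W j"
  proof -
    have "\<forall>j\<in>J. \<exists>\<phi> :: (nat \<Rightarrow> 'f vec) \<Rightarrow> 'f vec. \<forall>W\<in>?C. \<phi> (?g W) = file_content \<alpha> W j"
      using dec unfolding decodable_def by blast
    hence "\<exists>\<Phi>. \<forall>j\<in>J. \<forall>W\<in>?C. \<Phi> j (?g W) = file_content \<alpha> W j" by (rule bchoice)
    then obtain \<Phi> where P: "\<forall>j\<in>J. \<forall>W\<in>?C. \<Phi> j (?g W) = file_content \<alpha> W j" by (elim exE)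
    show ?thesis by (rule that[of \<Phi>]) (use P in simp)
  qed
  have injT: "inj_on (\<lambda>f. restrict f S) ?T"
  proof (rule inj_onI)
    fix f f' assume "f \<in> ?T" "f' \<in> ?T" "restrict f S = restrict f' S"
    hence fT: "f \<in> ?T" "f' \<in> ?T" and rr: "restrict f S = restrict f' S" by auto
    show "f = f'"
    proof
      fix t show "f t = f' t"
      proof (cases "t \<in> S")
        case True thus ?thesis using fun_cong[OF rr, of t] by simp
      next
        case False thus ?thesis using fT by simp
      qed
    qed
  qed
  have imT: "(\<lambda>f. restrict f S) ` ?T \<subseteq> PiE S (\<lambda>_. ?V)" by auto
  have fPi: "finite (PiE S (\<lambda>_. ?V))" using S fV by (simp add: finite_PiE)
  have cT: "card ?T \<le> card ?V ^ card S"
    using card_inj_on_le[OF injT imT fPi] card_PiE[OF S, of "\<lambda>_. ?V"] by simp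
  have fT: "finite ?T" using inj_on_finite[OF injT imT fPi] .
  have gT: "?g ` ?C \<subseteq> ?T" by (auto simp: node_content_def)
  have hg: "?h ` ?C \<subseteq> (\<lambda>f. restrict (\<lambda>j. \<phi> j f) J) ` (?g ` ?C)"
  proof
    fix x assume "x \<in> ?h ` ?C"
    then obtain W where W: "W \<in> ?C" "x = ?h W" by blast
    have "x = restrict (\<lambda>j. \<phi> j (?g W)) J" using W phi by (auto intro!: ext)
    thus "x \<in> (\<lambda>f. restrict (\<lambda>j. \<phi> j f) J) ` (?g ` ?C)" using W by blast
  qed
  have fg: "finite (?g ` ?C)" using finite_subset[OF gT fT] .
  have "card (?h ` ?C) \<le> card ((\<lambda>f. restrict (\<lambda>j. \<phi> j f) J) ` (?g ` ?C))"
    by (rule card_mono[OF finite_imageI[OF fg] hg])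
  also have "\<dots> \<le> card (?g ` ?C)" by (rule card_image_le[OF fg])
  also have "\<dots> \<le> card ?T" using card_mono[OF fT gT] .
  finally have c1: "card (?h ` ?C) \<le> card ?V ^ card S" using cT by simp
  have sur: "PiE J (\<lambda>_. ?V) \<subseteq> ?h ` ?C"
  proof
    fix F assume F: "F \<in> PiE J (\<lambda>_. ?V)"
    define W :: "'f vec" where "W = vec (k * \<alpha>) (\<lambda>p. if p div \<alpha> + 1 \<in> J then F (p div \<alpha> + 1) $ (p mod \<alpha>) else 0)"
    have WC: "W \<in> ?C" unfolding W_def by simp
    have "?h W = F"
    proof (rule ext)
      fix j show "?h W j = F j"
      proof (cases "j \<in> J")
        case True
        hence j: "1 \<le> j" "j \<le> k" using J by auto
        have Fj: "F j \<in> carrier_vec \<alpha>" using F True by (simp add: PiE_iff)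
        hence dF: "dim_vec (F j) = \<alpha>" by simp
        have "file_content \<alpha> W j = F j"
        proof (rule eq_vecI)
          show "dim_vec (file_content \<alpha> W j) = dim_vec (F j)" using dF by (simp add: file_content_def)
        next
          fix b assume "b < dim_vec (F j)"
          hence b: "b < \<alpha>" using dF by simp
          have lt: "(j - 1) * \<alpha> + b < k * \<alpha>"
          proof -
            have "(j - 1) * \<alpha> + b < (j - 1) * \<alpha> + \<alpha>" using b by simp
            also have "\<dots> = j * \<alpha>" using j by (cases j) auto
            also have "\<dots> \<le> k * \<alpha>" using j by simp
            finally show ?thesis .
          qed
          have d: "((j - 1) * \<alpha> + b) div \<alpha> = j - 1" "((j - 1) * \<alpha> + b) mod \<alpha> = b"
            using b by auto
          show "file_content \<alpha> W j $ b = F j $ b"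
            using b lt d j True unfolding file_content_def W_def by simp
        qed
        thus ?thesis using True by simp
      next
        case False thus ?thesis using F by auto
      qed
    qed
    thus "F \<in> ?h ` ?C" using WC by blast
  qed
  have fh: "finite (?h ` ?C)" by (rule finite_subset[OF hg finite_imageI[OF fg]])
  have "card (PiE J (\<lambda>_. ?V)) \<le> card (?h ` ?C)" by (rule card_mono[OF fh sur])
  moreover have "card (PiE J (\<lambda>_. ?V)) = card ?V ^ card J" by (simp add: card_PiE[OF fJ])
  ultimately have "card ?V ^ card J \<le> card (?h ` ?C)" by simp
  hence "card ?V ^ card J \<le> card ?V ^ card S" using c1 by simp
  moreover have "1 < card ?V" using card_carrier_vec_ge2[OF a, where 'f='f] by simp
  ultimately show ?thesis using power_le_imp_le_exp by blast
qed


lemma len_filter_map_card: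
  "length (filter P (map f [1..<n+1])) = card {t\<in>{1..n}. P (f t)}"
proof -
  have "length (filter P (map f [1..<n+1])) = length (filter (P \<circ> f) [1..<n+1])"
    by (simp add: filter_map)
  also have "\<dots> = card ({x. (P \<circ> f) x} \<inter> set [1..<n+1])" by (rule distinct_length_filter) simp
  also have "\<dots> = card {t\<in>{1..n}. P (f t)}" by (intro arg_cong[where f=card]) auto
  finally show ?thesis .
qed

lemma per_node:
  fixes G :: "'f::{field,finite} mat" and n k \<alpha> :: nat and \<tau> :: "nat \<Rightarrow> nat \<Rightarrow> real"
  assumes k1: "1 \<le> k" and a1: "1 \<le> \<alpha>"
    and G: "G \<in> carrier_mat (k * \<alpha>) (n * \<alpha>)"
    and r: "vec_space.rank (k * \<alpha>) G = k * \<alpha>"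
  shows "lam n \<tau> i (k - 1) \<le> L_max G n k \<alpha> \<tau> i
    \<and> (\<Sum>j<k. lam n \<tau> i j) \<le> (\<Sum>j\<in>{1..k}. latency G n k \<alpha> \<tau> j i)"
proof -
  define l where "l j = latency G n k \<alpha> \<tau> j i" for j
  define S where "S L = {t\<in>{1..n}. \<tau> t i \<le> L}" for L
  have lP: "decodable G k \<alpha> j (S (l j))" for j
  proof -
    have "(\<lambda>L. 0 \<le> L \<and> decodable G k \<alpha> j {t \<in> {1..n}. \<tau> t i \<le> L})
         (LEAST L. 0 \<le> L \<and> decodable G k \<alpha> j {t \<in> {1..n}. \<tau> t i \<le> L})"
      using least_ex[of "{1..n}" "decodable G k \<alpha> j" "\<lambda>t. \<tau> t i"]
        decodable_mono[of _ _ G k \<alpha> j] decodable_all[OF G r, of j] by blast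
    thus ?thesis unfolding l_def S_def latency_def by simp
  qed
  have cnt: "card {j\<in>{1..k}. l j \<le> L} \<le> card (S L)" for L
  proof (rule card_decode[OF a1])
    show "finite (S L)" unfolding S_def by simp
    show "{j\<in>{1..k}. l j \<le> L} \<subseteq> {1..k}" by auto
    show "\<forall>j\<in>{j\<in>{1..k}. l j \<le> L}. decodable G k \<alpha> j (S L)"
    proof
      fix j assume "j \<in> {j\<in>{1..k}. l j \<le> L}"
      hence "S (l j) \<subseteq> S L" unfolding S_def by auto
      thus "decodable G k \<alpha> j (S L)" using decodable_mono lP by blast
    qed
  qed
  have lamle: "lam n \<tau> i m \<le> L" if "m < card {j\<in>{1..k}. l j \<le> L}" for m L
  proof -
    have "m < length (filter (\<lambda>x. x \<le> L) (map (\<lambda>t. \<tau> t i) [1..<n+1]))"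
      using that cnt[of L] unfolding len_filter_map_card S_def by simp
    thus ?thesis unfolding lam_def by (rule sort_nth_le)
  qed
  have part1: "lam n \<tau> i (k - 1) \<le> L_max G n k \<alpha> \<tau> i"
  proof -
    have LM: "L_max G n k \<alpha> \<tau> i = Max (l ` {1..k})" unfolding L_max_def l_def by simp
    have "{j\<in>{1..k}. l j \<le> Max (l ` {1..k})} = {1..k}" by auto
    hence "k - 1 < card {j\<in>{1..k}. l j \<le> Max (l ` {1..k})}" using k1 by simp
    thus ?thesis using lamle LM by simp
  qed
  have part2: "(\<Sum>j<k. lam n \<tau> i j) \<le> (\<Sum>j\<in>{1..k}. l j)"
  proof -
    let ?xs = "map l [1..<k+1]"
    let ?ls = "sort ?xs"
    have "lam n \<tau> i m \<le> ?ls ! m" if m: "m < k" for m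
    proof (rule lamle)
      have "m < length (filter (\<lambda>x. x \<le> ?ls ! m) ?xs)" by (rule sort_nth_count) (use m in simp)
      thus "m < card {j\<in>{1..k}. l j \<le> ?ls ! m}" unfolding len_filter_map_card .
    qed
    hence "(\<Sum>j<k. lam n \<tau> i j) \<le> (\<Sum>j<k. ?ls ! j)" by (intro sum_mono) simp
    also have "(\<Sum>j<k. ?ls ! j) = sum_list ?ls"
    proof -
      have len: "length ?ls = k" by simp
      show ?thesis unfolding sum_list_sum_nth[of ?ls] len atLeast0LessThan by (rule refl)
    qed
    also have "\<dots> = sum_list ?xs" by (metis mset_sort sum_mset_sum_list)
    also have "\<dots> = (\<Sum>j\<in>{1..k}. l j)"
      by (metis sum_set_upt_conv_sum_list_nat Suc_eq_plus1 atLeastLessThanSuc_atLeastAtMost set_upt)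
    finally show ?thesis .
  qed
  show ?thesis using part1 part2 unfolding l_def by simp
qed

theorem proposition1:
  fixes G :: "'f::{field,finite} mat" and n k \<alpha> :: nat and \<tau> :: "nat \<Rightarrow> nat \<Rightarrow> real"
  assumes "1 \<le> k" and "k \<le> n" and "1 \<le> \<alpha>"
    and "G \<in> carrier_mat (k * \<alpha>) (n * \<alpha>)"
    and "vec_space.rank (k * \<alpha>) G = k * \<alpha>"
    and "\<And>i j. i \<in> {1..n} \<Longrightarrow> j \<in> {1..n} \<Longrightarrow> \<tau> i j = \<tau> j i"
    and "\<And>i. i \<in> {1..n} \<Longrightarrow> \<tau> i i = 0"
    and "\<And>i j. i \<in> {1..n} \<Longrightarrow> j \<in> {1..n} \<Longrightarrow> \<tau> i j \<ge> 0"
  shows "(\<forall>i\<in>{1..n}. L_max G n k \<alpha> \<tau> i \<ge> lam n \<tau> i (k - 1))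
    \<and> L_avg G n k \<alpha> \<tau> \<ge> (1 / (real k * real n)) * (\<Sum>i\<in>{1..n}. \<Sum>j<k. lam n \<tau> i j)"
proof -
  note pn = per_node[OF assms(1) assms(3) assms(4) assms(5)]
  have "(\<Sum>i\<in>{1..n}. \<Sum>j<k. lam n \<tau> i j) \<le> (\<Sum>i\<in>{1..n}. \<Sum>j\<in>{1..k}. latency G n k \<alpha> \<tau> j i)"
    using pn by (intro sum_mono) blast
  hence "(1 / (real k * real n)) * (\<Sum>i\<in>{1..n}. \<Sum>j<k. lam n \<tau> i j) \<le> L_avg G n k \<alpha> \<tau>"
    unfolding L_avg_def by (intro mult_left_mono) auto
  thus ?thesis using pn by blast
qed

end
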